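(* Let $\mathcal{P}$ be the set of probability distributions on $(\{0,1\},2^{\{0,1\}})$, let $\dot{\mathcal{P}}\subseteq\mathcal{P}$, and let $\ddot{\mathcal{P}}=\{\ddot P_1,\dots,\ddot P_c\}\subseteq\mathcal{P}$. Let $P^+$ denote the combination of the distributions in $\ddot{\mathcal{P}}$ with truth constrained by $\dot{\mathcal{P}}$. Let $\dot{\mathcal{P}}_0=\{\dot P(\{0\}):\dot P\in\dot{\mathcal{P}}\}$ and let $\underline{\ddot P},\overline{\ddot P}\in\mathcal{P}$ satisfy $$\underline{\ddot P}(\{0\})=\min_{i\in\{1,\dots,c\}:\ddot P_i(\{0\})\in\dot{\mathcal{P}}_0}\ddot P_i(\{0\}),\qquad \overline{\ddot P}(\{0\})=\max_{i\in\{1,\dots,c\}:\ddot P_i(\{0\})\in\dot{\mathcal{P}}_0}\ddot P_i(\{0\}).$$ If $\ddot P_i(\{0\})\in\dot{\mathcal{P}}_0$ for some $i\in\{1,\dots,c\}$, then $P^+=w^+\underline{\ddot P}+(1-w^+)\overline{\ddot P}$, where $$w^+=\arg\sup_{w\in[0,1]}\Big(w\,D\big(\underline{\ddot P}\,\|\,w\underline{\ddot P}+(1-w)\overline{\ddot P}\big)+(1-w)\,D\big(\overline{\ddot P}\,\|\,w\underline{\ddot P}+(1-w)\overline{\ddot P}\big)\Big).$$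
   Context: $D(P\|Q)=\sum_{i\in\{0,1\}}P(\{i\})\log\frac{P(\{i\})}{Q(\{i\})}$ (with $0\log0=0$, $0\log(0/0)=0$); $D(P'\|P''\rightsquigarrow Q)=D(P'\|P'')-D(P'\|Q)$. Game: $U(\dot P,P_1,P_2)=\langle -D(\dot P\|P_2),D(\dot P\|P_1\rightsquigarrow P_2)\rangle$, ordered lexicographically ($u\preceq v$ iff $u_1<v_1$, or $u_1=v_1$ and $u_2\le v_2$). For $Q\in\mathcal{P}$, $\mathcal{P}_Q=\arg\sup^{\preceq}_{\langle P',P''\rangle\in\dot{\mathcal{P}}\times\ddot{\mathcal{P}}}U(P',Q,P'')$, and the combination of the distributions in $\ddot{\mathcal{P}}$ with truth constrained by $\dot{\mathcal{P}}$ is $P^+=\arg\sup^{\preceq}_{Q\in\mathcal{P}:\langle\dot P_Q,\ddot P_Q\rangle\in\mathcal{P}_Q}U(\dot P_Q,\ddot P_Q,Q)$. *)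

theory Defs
  imports "HOL-Library.Extended_Real"
begin

text \<open>A probability distribution on ({0,1}, 2^{0,1}) is represented by its point-mass
  function P :: nat => real (P i = P({i})), nonnegative on {0,1}, summing to 1,
  and zero outside {0,1} (so that equality of distributions is equality of functions).\<close>

definition Dists :: "(nat \<Rightarrow> real) set" where
  "Dists = {P. P 0 \<ge> 0 \<and> P 1 \<ge> 0 \<and> P 0 + P 1 = 1 \<and> (\<forall>i. i \<notin> {0,1} \<longrightarrow> P i = 0)}"

definition kl_term :: "real \<Rightarrow> real \<Rightarrow> ereal" where
  "kl_term p q = (if p = 0 then 0 else if q = 0 then \<infinity> else ereal (p * ln (p / q)))"

definition KL :: "(nat \<Rightarrow> real) \<Rightarrow> (nat \<Rightarrow> real) \<Rightarrow> ereal" where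
  "KL P Q = (\<Sum>i\<in>{0::nat,1}. kl_term (P i) (Q i))"

definition KL_shift :: "(nat \<Rightarrow> real) \<Rightarrow> (nat \<Rightarrow> real) \<Rightarrow> (nat \<Rightarrow> real) \<Rightarrow> ereal" where
  "KL_shift P' P'' Q = KL P' P'' - KL P' Q"

definition U :: "(nat \<Rightarrow> real) \<Rightarrow> (nat \<Rightarrow> real) \<Rightarrow> (nat \<Rightarrow> real) \<Rightarrow> ereal \<times> ereal" where
  "U Pd P1 P2 = (- KL Pd P2, KL_shift Pd P1 P2)"

definition lex_le :: "ereal \<times> ereal \<Rightarrow> ereal \<times> ereal \<Rightarrow> bool" where
  "lex_le u v \<longleftrightarrow> fst u < fst v \<or> (fst u = fst v \<and> snd u \<le> snd v)"

definition PQ :: "(nat \<Rightarrow> real) set \<Rightarrow> (nat \<Rightarrow> real) set \<Rightarrow> (nat \<Rightarrow> real)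
    \<Rightarrow> ((nat \<Rightarrow> real) \<times> (nat \<Rightarrow> real)) set" where
  "PQ Pdot Pddot Q = {(P', P''). P' \<in> Pdot \<and> P'' \<in> Pddot \<and>
      (\<forall>a\<in>Pdot. \<forall>b\<in>Pddot. lex_le (U a Q b) (U P' Q P''))}"

definition combination :: "(nat \<Rightarrow> real) set \<Rightarrow> (nat \<Rightarrow> real) set \<Rightarrow> (nat \<Rightarrow> real) set" where
  "combination Pdot Pddot = {Q \<in> Dists. \<exists>(a, b) \<in> PQ Pdot Pddot Q.
      \<forall>Q'\<in>Dists. \<forall>(a', b') \<in> PQ Pdot Pddot Q'. lex_le (U a' b' Q') (U a b Q)}"

definition mix :: "real \<Rightarrow> (nat \<Rightarrow> real) \<Rightarrow> (nat \<Rightarrow> real) \<Rightarrow> (nat \<Rightarrow> real)" where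
  "mix w P Q = (\<lambda>i. w * P i + (1 - w) * Q i)"

definition mix_objective :: "(nat \<Rightarrow> real) \<Rightarrow> (nat \<Rightarrow> real) \<Rightarrow> real \<Rightarrow> ereal" where
  "mix_objective Plo Phi w =
     ereal w * KL Plo (mix w Plo Phi) + ereal (1 - w) * KL Phi (mix w Plo Phi)"

definition argsup_w :: "(nat \<Rightarrow> real) \<Rightarrow> (nat \<Rightarrow> real) \<Rightarrow> real set" where
  "argsup_w Plo Phi = {w \<in> {0..1}. \<forall>v\<in>{0..1}. mix_objective Plo Phi v \<le> mix_objective Plo Phi w}"

end

theory Submission
  imports Defs
begin

definition RR :: "real \<Rightarrow> real \<Rightarrow> real" where
  "RR p q = p * ln p - p * ln q + (1-p) * ln (1-p) - (1-p) * ln (1-q)"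

lemma Dists_D: "P \<in> Dists \<Longrightarrow> 0 \<le> P 0 \<and> P 0 \<le> 1 \<and> P 1 = 1 - P 0"
  unfolding Dists_def by auto

lemma Dists_eq: assumes "P \<in> Dists" "Q \<in> Dists" "P 0 = Q 0" shows "P = Q"
proof
  fix i show "P i = Q i"
  proof (cases "i \<in> {0,1}")
    case True then show ?thesis using assms Dists_D[of P] Dists_D[of Q] by auto
  next
    case False then show ?thesis using assms unfolding Dists_def by auto
  qed
qed

lemma term_ge:
  fixes p q :: real assumes "0 \<le> p" "0 < q"
  shows "p * ln p - p * ln q \<ge> p - q" and "p \<noteq> q \<Longrightarrow> p * ln p - p * ln q > p - q"
proof -
  have "p * ln p - p * ln q \<ge> p - q \<and> (p \<noteq> q \<longrightarrow> p * ln p - p * ln q > p - q)"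
  proof (cases "p = 0")
    case True then show ?thesis using assms by auto
  next
    case False
    hence pp: "p > 0" using assms by auto
    have e: "p * ln p - p * ln q = - p * ln (q/p)" using pp assms by (simp add: ln_divide_pos algebra_simps)
    have l: "ln (q/p) \<le> q/p - 1" using ln_le_minus_one pp assms by simp
    have "- p * ln (q/p) \<ge> - p * (q/p - 1)" using l pp by (simp add: mult_left_mono)
    moreover have "- p * (q/p - 1) = p - q" using pp by (simp add: field_simps)
    moreover have "p \<noteq> q \<longrightarrow> ln (q/p) < q/p - 1"
    proof
      assume "p \<noteq> q"
      hence "q/p \<noteq> 1" using pp by simp
      hence "ln (q/p) \<noteq> q/p - 1" using ln_eq_minus_one[of "q/p"] pp assms by auto
      with l show "ln (q/p) < q/p - 1" by simp
    qed
    moreover have "ln (q/p) < q/p - 1 \<Longrightarrow> - p * ln (q/p) > - p * (q/p - 1)" using pp by simp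
    ultimately show ?thesis using e by auto
  qed
  then show "p * ln p - p * ln q \<ge> p - q" and "p \<noteq> q \<Longrightarrow> p * ln p - p * ln q > p - q" by auto
qed

lemma gibbs:
  assumes "0 \<le> p" "p \<le> 1" "0 < q" "q < 1"
  shows "RR p q \<ge> 0" and "RR p q = 0 \<Longrightarrow> p = q"
proof -
  have a: "p * ln p - p * ln q \<ge> p - q" using term_ge assms by auto
  have b: "(1-p) * ln (1-p) - (1-p) * ln (1-q) \<ge> (1-p) - (1-q)" using term_ge[of "1-p" "1-q"] assms by auto
  show "RR p q \<ge> 0" using a b unfolding RR_def by simp
  assume z: "RR p q = 0"
  show "p = q"
  proof (rule ccontr)
    assume "p \<noteq> q"
    hence "p * ln p - p * ln q > p - q" using term_ge assms by auto
    with b z show False unfolding RR_def by simp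
  qed
qed

lemma RR_self: "RR p p = 0" unfolding RR_def by simp

lemma kl_term_fin: assumes "0 \<le> p" "p > 0 \<Longrightarrow> q > 0"
  shows "kl_term p q = ereal (p * ln p - p * ln q)"
proof (cases "p = 0")
  case True then show ?thesis unfolding kl_term_def by simp
next
  case False
  then have "p > 0" "q > 0" using assms by auto
  then show ?thesis using False unfolding kl_term_def by (simp add: ln_divide_pos right_diff_distrib)
qed

lemma KL_RR: assumes "P \<in> Dists" "Q \<in> Dists" "0 < Q 0" "Q 0 < 1"
  shows "KL P Q = ereal (RR (P 0) (Q 0))"
proof -
  have "kl_term (P 0) (Q 0) = ereal (P 0 * ln (P 0) - P 0 * ln (Q 0))"
    using assms Dists_D[of P] by (intro kl_term_fin) auto
  moreover have "kl_term (1 - P 0) (1 - Q 0) = ereal ((1 - P 0) * ln (1 - P 0) - (1 - P 0) * ln (1 - Q 0))"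
    using assms Dists_D[of P] Dists_D[of Q] by (intro kl_term_fin) auto
  moreover have "P 1 = 1 - P 0" "Q 1 = 1 - Q 0" using assms Dists_D by auto
  ultimately show ?thesis unfolding KL_def RR_def by simp
qed

lemma KL_self: "KL P P = 0"
  unfolding KL_def kl_term_def by simp

lemma KL_nonneg: assumes "P \<in> Dists" "Q \<in> Dists"
  shows "KL P Q \<ge> 0" and "KL P Q = 0 \<Longrightarrow> P = Q"
proof -
  have "KL P Q \<ge> 0 \<and> (KL P Q = 0 \<longrightarrow> P = Q)"
  proof (cases "0 < Q 0 \<and> Q 0 < 1")
    case True
    then show ?thesis using KL_RR[OF assms] gibbs[of "P 0" "Q 0"] Dists_D[OF assms(1)]
      Dists_eq[OF assms] by auto
  next
    case False
    have dp: "0 \<le> P 0" "P 0 \<le> 1" "P 1 = 1 - P 0" using Dists_D[OF assms(1)] by auto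
    have dq: "0 \<le> Q 0" "Q 0 \<le> 1" "Q 1 = 1 - Q 0" using Dists_D[OF assms(2)] by auto
    show ?thesis
    proof (cases "Q 0 = 0")
      case q0: True
      show ?thesis
      proof (cases "P 0 = 0")
        case True
        then have "KL P Q = 0" unfolding KL_def kl_term_def using dp dq q0 by simp
        then show ?thesis using Dists_eq[OF assms] True q0 by simp
      next
        case False
        then have "KL P Q = \<infinity>" unfolding KL_def kl_term_def using dp dq q0 by simp
        then show ?thesis by simp
      qed
    next
      case qn: False
      hence q1: "Q 0 = 1" using False dq by auto
      show ?thesis
      proof (cases "P 0 = 1")
        case True
        then have "KL P Q = 0" unfolding KL_def kl_term_def using dp dq q1 by simp
        then show ?thesis using Dists_eq[OF assms] True q1 by simp
      next
        case False
        then have "KL P Q = \<infinity>" unfolding KL_def kl_term_def using dp dq q1 by simp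
        then show ?thesis by simp
      qed
    qed
  qed
  then show "KL P Q \<ge> 0" "KL P Q = 0 \<Longrightarrow> P = Q" by auto
qed

lemma weighted:
  assumes "0 \<le> v" "0 \<le> p" "p \<le> 1" "v > 0 \<Longrightarrow> p > 0 \<Longrightarrow> q > 0" "v > 0 \<Longrightarrow> p < 1 \<Longrightarrow> q < 1"
  shows "ereal v * (kl_term p q + kl_term (1-p) (1-q)) = ereal (v * RR p q)"
proof (cases "v = 0")
  case True then show ?thesis by (simp add: zero_ereal_def[symmetric])
next
  case False
  hence v: "v > 0" using assms by auto
  have "kl_term p q = ereal (p * ln p - p * ln q)" using assms v by (intro kl_term_fin) auto
  moreover have "kl_term (1-p) (1-q) = ereal ((1-p) * ln (1-p) - (1-p) * ln (1-q))"
    using assms v by (intro kl_term_fin) auto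
  ultimately show ?thesis unfolding RR_def by simp
qed

lemma identity:
  assumes "qv = v*x + (1-v)*y"
  shows "v * RR x q + (1-v) * RR y q = v * RR x qv + (1-v) * RR y qv + RR qv q"
proof -
  have e1: "1 - qv = v*(1-x) + (1-v)*(1-y)" using assms by (simp add: algebra_simps)
  have g: "qv * L = v*x*L + (1-v)*y*L" for L using assms by (simp add: distrib_right)
  have "qv * ln qv = v*x*ln qv + (1-v)*y*ln qv" by (rule g)
  moreover have "(1-qv) * ln (1-qv) = v*(1-x)*ln (1-qv) + (1-v)*(1-y)*ln (1-qv)"
    using e1 by (metis distrib_right)
  moreover have "qv * ln q = v*x*ln q + (1-v)*y*ln q" by (rule g)
  moreover have "(1-qv) * ln (1-q) = v*(1-x)*ln (1-q) + (1-v)*(1-y)*ln (1-q)"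
    using e1 by (metis distrib_right)
  ultimately show ?thesis unfolding RR_def by (simp add: algebra_simps)
qed


lemma ereal_zero_minus: "(0::ereal) - x = - x" by (cases x) auto

lemma PQ_char:
  assumes "Pdot \<subseteq> Dists" "Pddot \<subseteq> Dists" "Pdot \<inter> Pddot \<noteq> {}"
  shows "(a,b) \<in> PQ Pdot Pddot Q \<longleftrightarrow>
    a = b \<and> a \<in> Pdot \<inter> Pddot \<and> (\<forall>b'\<in>Pdot \<inter> Pddot. KL b' Q \<le> KL a Q)"
proof
  assume h: "(a,b) \<in> PQ Pdot Pddot Q"
  hence ab: "a \<in> Pdot" "b \<in> Pddot" and all: "\<forall>a'\<in>Pdot. \<forall>b'\<in>Pddot. lex_le (U a' Q b') (U a Q b)"
    unfolding PQ_def by auto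
  obtain b0 where b0: "b0 \<in> Pdot \<inter> Pddot" using assms by auto
  have "lex_le (U b0 Q b0) (U a Q b)" using all b0 by auto
  moreover have "KL a b \<ge> 0" using KL_nonneg ab assms by blast
  ultimately have "KL a b = 0" unfolding lex_le_def U_def KL_shift_def by (auto simp: KL_self)
  hence eq: "a = b" using KL_nonneg ab assms by blast
  have "\<forall>b'\<in>Pdot \<inter> Pddot. KL b' Q \<le> KL a Q"
  proof
    fix b' assume "b' \<in> Pdot \<inter> Pddot"
    hence "lex_le (U b' Q b') (U a Q b)" using all by auto
    then show "KL b' Q \<le> KL a Q" unfolding lex_le_def U_def KL_shift_def using eq by (auto simp: KL_self)
  qed
  then show "a = b \<and> a \<in> Pdot \<inter> Pddot \<and> (\<forall>b'\<in>Pdot \<inter> Pddot. KL b' Q \<le> KL a Q)"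
    using eq ab by auto
next
  assume h: "a = b \<and> a \<in> Pdot \<inter> Pddot \<and> (\<forall>b'\<in>Pdot \<inter> Pddot. KL b' Q \<le> KL a Q)"
  have "lex_le (U a' Q b') (U a Q b)" if "a' \<in> Pdot" "b' \<in> Pddot" for a' b'
  proof (cases "a' = b'")
    case True then show ?thesis using h that unfolding lex_le_def U_def KL_shift_def by (auto simp: KL_self)
  next
    case False
    then have "KL a' b' \<noteq> 0" "KL a' b' \<ge> 0" using KL_nonneg that assms by blast+
    then have "- KL a' b' < 0" by (simp add: ereal_uminus_less_reorder)
    then show ?thesis using h unfolding lex_le_def U_def KL_shift_def by (auto simp: KL_self)
  qed
  then show "(a,b) \<in> PQ Pdot Pddot Q" using h unfolding PQ_def by auto
qed

lemma exists_max:
  fixes f :: "'a \<Rightarrow> 'b::linorder"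
  assumes "finite S" "S \<noteq> {}" shows "\<exists>b\<in>S. \<forall>b'\<in>S. f b' \<le> f b"
proof -
  have "Max (f ` S) \<in> f ` S" using assms by simp
  then obtain b where "b \<in> S" "f b = Max (f ` S)" by auto
  moreover have "\<forall>b'\<in>S. f b' \<le> Max (f ` S)" using assms by simp
  ultimately show ?thesis by metis
qed

lemma combination_single:
  assumes "Pdot \<subseteq> Dists" "Pddot \<subseteq> Dists" "finite (Pdot \<inter> Pddot)"
    and lo: "lo \<in> Pdot \<inter> Pddot" and hi: "hi \<in> Pdot \<inter> Pddot" and Qs: "Qs \<in> Dists"
    and maxs: "\<forall>b\<in>Pdot \<inter> Pddot. KL b Qs \<le> KL lo Qs"
    and strict: "\<forall>Q'\<in>Dists. Q' \<noteq> Qs \<longrightarrow> KL lo Qs < KL lo Q' \<or> KL lo Qs < KL hi Q'"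
  shows "combination Pdot Pddot = {Qs}"
proof -
  let ?S = "Pdot \<inter> Pddot"
  have ne: "?S \<noteq> {}" using lo by auto
  note pq = PQ_char[OF assms(1,2) ne]
  have Ueq: "U a a Q = (- KL a Q, - KL a Q)" for a Q
    unfolding U_def KL_shift_def by (simp add: KL_self ereal_zero_minus)
  have lexeq: "lex_le (U b' b' Q') (U b b Q) \<longleftrightarrow> KL b Q \<le> KL b' Q'" for b b' Q Q'
    unfolding Ueq lex_le_def by auto
  have geQ: "KL lo Qs \<le> KL b' Q'" if "Q' \<in> Dists" "b' \<in> ?S" "\<forall>b''\<in>?S. KL b'' Q' \<le> KL b' Q'" for Q' b'
  proof (cases "Q' = Qs")
    case True then show ?thesis using that lo by auto
  next
    case False
    then have "KL lo Qs < KL lo Q' \<or> KL lo Qs < KL hi Q'" using strict that by auto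
    then show ?thesis using that lo hi by force
  qed
  have "Qs \<in> combination Pdot Pddot"
    unfolding combination_def
  proof (intro CollectI conjI Qs bexI[of _ "(lo,lo)"])
    show "(lo, lo) \<in> PQ Pdot Pddot Qs" using pq lo maxs by auto
    show "case (lo, lo) of (a, b) \<Rightarrow> \<forall>Q'\<in>Dists. \<forall>(a', b')\<in>PQ Pdot Pddot Q'. lex_le (U a' b' Q') (U a b Qs)"
    proof (simp only: prod.case, intro ballI, clarify)
      fix Q' a' b' assume "Q' \<in> Dists" "(a',b') \<in> PQ Pdot Pddot Q'"
      then show "lex_le (U a' b' Q') (U lo lo Qs)" using pq geQ lexeq by auto
    qed
  qed
  moreover have "Q = Qs" if "Q \<in> combination Pdot Pddot" for Q
  proof -
    from that obtain a b where Q: "Q \<in> Dists" and ab: "(a,b) \<in> PQ Pdot Pddot Q"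
      and all: "\<forall>Q'\<in>Dists. \<forall>(a', b')\<in>PQ Pdot Pddot Q'. lex_le (U a' b' Q') (U a b Q)"
      unfolding combination_def by auto
    have abS: "a = b" "b \<in> ?S" "\<forall>b'\<in>?S. KL b' Q \<le> KL b Q" using ab pq by auto
    have "(lo,lo) \<in> PQ Pdot Pddot Qs" using pq lo maxs by auto
    hence "lex_le (U lo lo Qs) (U b b Q)" using all Qs abS by auto
    hence le: "KL b Q \<le> KL lo Qs" using lexeq by auto
    show "Q = Qs"
    proof (rule ccontr)
      assume "Q \<noteq> Qs"
      hence "KL lo Qs < KL lo Q \<or> KL lo Qs < KL hi Q" using strict Q by auto
      then show False using le abS lo hi by force
    qed
  qed
  ultimately show ?thesis by blast
qed


lemma qs_exists:
  fixes x y :: real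
  assumes "0 \<le> x" "x < y" "y \<le> 1"
  shows "\<exists>qs. x < qs \<and> qs < y \<and> RR x qs = RR y qs"
proof -
  define h where "h p = p * ln p + (1-p) * ln (1-p)" for p :: real
  define K where "K = (h y - h x) / (y - x)"
  define e where "e = exp K"
  define qs where "qs = e / (1 + e)"
  have ep: "e > 0" unfolding e_def by simp
  have q1: "1 - qs = 1 / (1 + e)" unfolding qs_def using ep by (simp add: field_simps)
  have qpos: "qs > 0" "qs < 1" unfolding qs_def using ep by auto
  have lnq: "ln qs - ln (1 - qs) = K"
  proof -
    have "ln qs = ln e - ln (1+e)" unfolding qs_def using ep by (simp add: ln_divide_pos)
    moreover have "ln (1 - qs) = - ln (1+e)" unfolding q1 using ep by (simp add: ln_div)
    ultimately show ?thesis unfolding e_def by simp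
  qed
  have Rh: "RR p q = h p - p * ln q - (1-p) * ln (1-q)" for p q unfolding RR_def h_def by simp
  have KK: "K * (y - x) = h y - h x" unfolding K_def using assms by simp
  have eqR: "RR x qs = RR y qs"
  proof -
    have "RR x qs - RR y qs = h x - h y + (y - x) * (ln qs - ln (1 - qs))"
      unfolding Rh by (simp add: algebra_simps)
    also have "\<dots> = 0" using lnq KK by (simp add: algebra_simps)
    finally show ?thesis by simp
  qed
  have lo: "x < qs"
  proof (cases "x = 0")
    case True then show ?thesis using qpos by simp
  next
    case False
    hence x01: "0 < x" "x < 1" using assms by auto
    have "RR y x > 0" using gibbs[of y x] x01 assms by force
    moreover have "RR y x = h y - h x - (ln x - ln (1-x)) * (y - x)"
      unfolding Rh by (simp add: algebra_simps h_def)
    ultimately have "(ln x - ln (1-x)) * (y - x) < K * (y - x)" using KK by simp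
    hence "ln x - ln (1-x) < K" using assms by simp
    hence "exp (ln x - ln (1-x)) < e" unfolding e_def by simp
    hence "x / (1 - x) < e" using x01 by (simp add: exp_diff)
    hence "x < e * (1 - x)" using x01 by (simp add: divide_less_eq)
    then show ?thesis unfolding qs_def using ep by (simp add: less_divide_eq algebra_simps)
  qed
  have hi: "qs < y"
  proof (cases "y = 1")
    case True then show ?thesis using qpos by simp
  next
    case False
    hence y01: "0 < y" "y < 1" using assms by auto
    have "RR x y > 0" using gibbs[of x y] y01 assms by force
    moreover have "RR x y = - (h y - h x - (ln y - ln (1-y)) * (y - x))"
      unfolding Rh by (simp add: algebra_simps h_def)
    ultimately have "K * (y - x) < (ln y - ln (1-y)) * (y - x)" using KK by simp
    hence "K < ln y - ln (1-y)" using assms by simp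
    hence "e < exp (ln y - ln (1-y))" unfolding e_def by simp
    hence "e < y / (1 - y)" using y01 by (simp add: exp_diff)
    hence "e * (1 - y) < y" using y01 by (simp add: less_divide_eq)
    then show ?thesis unfolding qs_def using ep by (simp add: divide_less_eq algebra_simps)
  qed
  show ?thesis using lo hi eqR by blast
qed

lemma kl_term_nm: "kl_term p q \<noteq> - \<infinity>" unfolding kl_term_def by auto

lemma KL_01: "KL P Q = kl_term (P 0) (Q 0) + kl_term (P 1) (Q 1)" unfolding KL_def by simp

lemma KL_inf0: "kl_term (P 0) (Q 0) = \<infinity> \<Longrightarrow> KL P Q = \<infinity>"
  unfolding KL_01 using kl_term_nm[of "P 1" "Q 1"] by simp

lemma KL_inf1: "kl_term (P 1) (Q 1) = \<infinity> \<Longrightarrow> KL P Q = \<infinity>"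
  unfolding KL_01 using kl_term_nm[of "P 0" "Q 0"] by simp

lemma KL_split: "P \<in> Dists \<Longrightarrow> Q \<in> Dists \<Longrightarrow> KL P Q = kl_term (P 0) (Q 0) + kl_term (1 - P 0) (1 - Q 0)"
  unfolding KL_def using Dists_D[of P] Dists_D[of Q] by simp

lemma mix_Dists: assumes "P \<in> Dists" "Q \<in> Dists" "0 \<le> w" "w \<le> 1" shows "mix w P Q \<in> Dists"
proof -
  have p: "0 \<le> P 0" "0 \<le> P 1" "P 0 + P 1 = 1" "\<forall>i. i \<notin> {0,1} \<longrightarrow> P i = 0"
    and q: "0 \<le> Q 0" "0 \<le> Q 1" "Q 0 + Q 1 = 1" "\<forall>i. i \<notin> {0,1} \<longrightarrow> Q i = 0"
    using assms(1,2) unfolding Dists_def by auto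
  have "0 \<le> w * P 0 + (1-w) * Q 0" using p q assms by simp
  moreover have "0 \<le> w * P 1 + (1-w) * Q 1" using p q assms by simp
  moreover have "(w * P 0 + (1-w) * Q 0) + (w * P 1 + (1-w) * Q 1) = 1"
  proof -
    have "(w * P 0 + (1-w) * Q 0) + (w * P 1 + (1-w) * Q 1) = w * (P 0 + P 1) + (1-w) * (Q 0 + Q 1)"
      by (simp add: distrib_left)
    then show ?thesis using p q by simp
  qed
  moreover have "\<forall>i. i \<notin> {0,1} \<longrightarrow> w * P i + (1-w) * Q i = 0" using p q by simp
  ultimately show ?thesis unfolding Dists_def mix_def by simp
qed


theorem corollary6:
  fixes Pdot :: "(nat \<Rightarrow> real) set"
    and Pdd :: "nat \<Rightarrow> (nat \<Rightarrow> real)"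
    and c :: nat
    and Plo Phi :: "nat \<Rightarrow> real"
  assumes "Pdot \<subseteq> Dists"
    and "\<forall>i\<in>{1..c}. Pdd i \<in> Dists"
    and "Plo \<in> Dists" and "Phi \<in> Dists"
    and "Plo 0 = Min {Pdd i 0 | i. i \<in> {1..c} \<and> Pdd i 0 \<in> (\<lambda>P. P 0) ` Pdot}"
    and "Phi 0 = Max {Pdd i 0 | i. i \<in> {1..c} \<and> Pdd i 0 \<in> (\<lambda>P. P 0) ` Pdot}"
    and "\<exists>i\<in>{1..c}. Pdd i 0 \<in> (\<lambda>P. P 0) ` Pdot"
  shows "argsup_w Plo Phi \<noteq> {} \<and>
         (\<forall>w\<in>argsup_w Plo Phi. combination Pdot (Pdd ` {1..c}) = {mix w Plo Phi})"
proof -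
  let ?A = "{Pdd i 0 | i. i \<in> {1..c} \<and> Pdd i 0 \<in> (\<lambda>P. P 0) ` Pdot}"
  define S where "S = Pdot \<inter> Pdd ` {1..c}"
  have PddD: "Pdd ` {1..c} \<subseteq> Dists" using assms(2) by auto
  have AS: "?A = (\<lambda>b. b 0) ` S"
  proof
    show "?A \<subseteq> (\<lambda>b. b 0) ` S"
    proof
      fix t assume "t \<in> ?A"
      then obtain i a where i: "i \<in> {1..c}" "a \<in> Pdot" "a 0 = Pdd i 0" "t = Pdd i 0" by auto
      hence "a = Pdd i" using Dists_eq assms(1,2) by blast
      then show "t \<in> (\<lambda>b. b 0) ` S" unfolding S_def using i by auto
    qed
    show "(\<lambda>b. b 0) ` S \<subseteq> ?A" unfolding S_def by auto
  qed
  have finS: "finite S" unfolding S_def by auto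
  have neS: "S \<noteq> {}"
  proof -
    obtain i where "i \<in> {1..c}" "Pdd i 0 \<in> (\<lambda>P. P 0) ` Pdot" using assms(7) by blast
    hence "Pdd i 0 \<in> ?A" by blast
    hence "Pdd i 0 \<in> (\<lambda>b. b 0) ` S" unfolding AS .
    then show ?thesis by auto
  qed
  have SD: "S \<subseteq> Dists" unfolding S_def using assms(1) by auto
  have finA: "finite ?A" "?A \<noteq> {}" using AS finS neS by auto
  have loS: "Plo \<in> S"
  proof -
    have "Min ?A \<in> ?A" using finA by (rule Min_in)
    hence "Plo 0 \<in> ?A" using assms(5) by simp
    hence "Plo 0 \<in> (\<lambda>b. b 0) ` S" unfolding AS .
    then obtain b where "b \<in> S" "b 0 = Plo 0" by (metis imageE)
    then show ?thesis using Dists_eq[of Plo b] assms(3) SD by auto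
  qed
  have hiS: "Phi \<in> S"
  proof -
    have "Max ?A \<in> ?A" using finA by (rule Max_in)
    hence "Phi 0 \<in> ?A" using assms(6) by simp
    hence "Phi 0 \<in> (\<lambda>b. b 0) ` S" unfolding AS .
    then obtain b where "b \<in> S" "b 0 = Phi 0" by (metis imageE)
    then show ?thesis using Dists_eq[of Phi b] assms(4) SD by auto
  qed
  have bnd: "Plo 0 \<le> b 0 \<and> b 0 \<le> Phi 0" if "b \<in> S" for b
  proof -
    have "b 0 \<in> (\<lambda>b. b 0) ` S" using that by simp
    hence m: "b 0 \<in> ?A" unfolding AS .
    have "Min ?A \<le> b 0" using finA(1) m by (rule Min_le)
    moreover have "b 0 \<le> Max ?A" using finA(1) m by (rule Max_ge)
    ultimately show ?thesis using assms(5,6) by linarith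
  qed
  define x where "x = Plo 0"
  define y where "y = Phi 0"
  have xy: "0 \<le> x" "x \<le> y" "y \<le> 1" using Dists_D[OF assms(3)] Dists_D[OF assms(4)] bnd[OF loS]
    unfolding x_def y_def by auto
  have comb: "combination Pdot (Pdd ` {1..c}) = {Qs}"
    if "Qs \<in> Dists" "\<forall>b\<in>S. KL b Qs \<le> KL Plo Qs"
       "\<forall>Q'\<in>Dists. Q' \<noteq> Qs \<longrightarrow> KL Plo Qs < KL Plo Q' \<or> KL Plo Qs < KL Phi Q'" for Qs
  proof -
    have f: "finite (Pdot \<inter> Pdd ` {1..c})" using finS unfolding S_def .
    have l: "Plo \<in> Pdot \<inter> Pdd ` {1..c}" using loS unfolding S_def .
    have h: "Phi \<in> Pdot \<inter> Pdd ` {1..c}" using hiS unfolding S_def .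
    have m: "\<forall>b\<in>Pdot \<inter> Pdd ` {1..c}. KL b Qs \<le> KL Plo Qs" using that(2) unfolding S_def .
    show ?thesis by (rule combination_single[OF assms(1) PddD f l h that(1) m that(3)])
  qed
  show ?thesis
  proof (cases "x = y")
    case True
    hence eq: "Phi = Plo" using Dists_eq assms(3,4) unfolding x_def y_def by metis
    have mixlo: "mix w Plo Plo = Plo" for w unfolding mix_def by (simp add: algebra_simps)
    have obj: "mix_objective Plo Phi w = 0" for w
      unfolding mix_objective_def eq mixlo by (simp add: KL_self)
    have arg: "argsup_w Plo Phi = {0..1}" unfolding argsup_w_def obj by auto
    have "combination Pdot (Pdd ` {1..c}) = {Plo}"
    proof (rule comb)
      show "Plo \<in> Dists" by (rule assms(3))
      show "\<forall>b\<in>S. KL b Plo \<le> KL Plo Plo"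
      proof
        fix b assume "b \<in> S"
        hence "b = Plo" using bnd True Dists_eq[of b Plo] SD assms(3) unfolding x_def y_def
          by (metis antisym subsetD)
        then show "KL b Plo \<le> KL Plo Plo" by simp
      qed
      show "\<forall>Q'\<in>Dists. Q' \<noteq> Plo \<longrightarrow> KL Plo Plo < KL Plo Q' \<or> KL Plo Plo < KL Phi Q'"
      proof (intro ballI impI)
        fix Q' assume "Q' \<in> Dists" "Q' \<noteq> Plo"
        then have "KL Plo Q' \<noteq> 0" "KL Plo Q' \<ge> 0" using KL_nonneg[OF assms(3)] by auto
        then have "0 < KL Plo Q'" by (simp add: order_less_le)
        then show "KL Plo Plo < KL Plo Q' \<or> KL Plo Plo < KL Phi Q'" by (simp add: KL_self)
      qed
    qed
    then show ?thesis using arg eq mixlo by auto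
  next
    case False
    hence xy': "x < y" using xy by simp
    obtain qs where qs: "x < qs" "qs < y" "RR x qs = RR y qs" using qs_exists[of x y] xy xy' by auto
    define C where "C = RR x qs"
    define ws where "ws = (y - qs) / (y - x)"
    have ws: "0 < ws" "ws < 1" unfolding ws_def using qs by (auto simp: field_simps)
    have wsy: "ws * (y - x) = y - qs" unfolding ws_def using xy' by simp
    have "ws * x + (1 - ws) * y = y - ws * (y - x)" by (simp add: algebra_simps)
    hence qsw: "qs = ws * x + (1 - ws) * y" using wsy by simp
    define Qs where "Qs = mix ws Plo Phi"
    have QsD: "Qs \<in> Dists" unfolding Qs_def using mix_Dists assms(3,4) ws by auto
    have Qs0: "Qs 0 = qs" unfolding Qs_def mix_def x_def y_def qsw by simp
    have qs01: "0 < qs" "qs < 1" using qs xy by auto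
    have KLQs: "KL b Qs = ereal (RR (b 0) qs)" if "b \<in> Dists" for b
      using KL_RR[OF that QsD] Qs0 qs01 by simp
    have KLlo: "KL Plo Qs = ereal C" using KLQs assms(3) unfolding C_def x_def by simp
    have maxs: "\<forall>b\<in>S. KL b Qs \<le> KL Plo Qs"
    proof
      fix b assume bS: "b \<in> S"
      define p where "p = b 0"
      have pb: "x \<le> p" "p \<le> y" using bnd[OF bS] unfolding p_def x_def y_def by auto
      define l where "l = (y - p) / (y - x)"
      have l: "0 \<le> l" "l \<le> 1" unfolding l_def using pb xy' by (auto simp: field_simps)
      have ly: "l * (y - x) = y - p" unfolding l_def using xy' by simp
    have "l * x + (1 - l) * y = y - l * (y - x)" by (simp add: algebra_simps)
    hence pl: "p = l * x + (1 - l) * y" using ly by simp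
      have idn: "l * RR x qs + (1-l) * RR y qs = l * RR x p + (1-l) * RR y p + RR p qs"
        by (rule identity[OF pl])
      have l0: "l = 0" if "p = y" unfolding l_def using that by simp
      have l1: "1 - l = 0" if "p = x" unfolding l_def using that xy' by simp
      have t1: "l * RR x p \<ge> 0"
      proof (cases "p = x \<or> p = y")
        case True then show ?thesis using l0 by (auto simp: RR_self)
      next
        case False
        hence "0 < p" "p < 1" using pb xy by auto
        then show ?thesis using gibbs[of x p] xy l by simp
      qed
      have t2: "(1-l) * RR y p \<ge> 0"
      proof (cases "p = x \<or> p = y")
        case True then show ?thesis using l1 by (auto simp: RR_self)
      next
        case False
        hence "0 < p" "p < 1" using pb xy by auto
        then show ?thesis using gibbs[of y p] xy l by simp
      qed
      have "RR p qs \<le> C" using idn t1 t2 qs(3) unfolding C_def by (simp add: algebra_simps)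
      then show "KL b Qs \<le> KL Plo Qs" using KLQs[of b] KLlo bS SD unfolding p_def by auto
    qed
    have strict: "\<forall>Q'\<in>Dists. Q' \<noteq> Qs \<longrightarrow> KL Plo Qs < KL Plo Q' \<or> KL Plo Qs < KL Phi Q'"
    proof (intro ballI impI)
      fix Q' assume Q': "Q' \<in> Dists" "Q' \<noteq> Qs"
      define q where "q = Q' 0"
      have q: "0 \<le> q" "q \<le> 1" "Q' 1 = 1 - q" using Dists_D[OF Q'(1)] unfolding q_def by auto
      show "KL Plo Qs < KL Plo Q' \<or> KL Plo Qs < KL Phi Q'"
      proof (cases "q = 0")
        case True
        have "y > 0" using xy xy' by simp
        hence "kl_term (Phi 0) (Q' 0) = \<infinity>" unfolding kl_term_def y_def q_def[symmetric] True by simp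
        hence "KL Phi Q' = \<infinity>" by (rule KL_inf0)
        then show ?thesis using KLlo by simp
      next
        case qn0: False
        show ?thesis
        proof (cases "q = 1")
          case True
          have "1 - x > 0" using xy xy' by simp
          hence "kl_term (Plo 1) (Q' 1) = \<infinity>"
            using Dists_D[OF assms(3)] unfolding kl_term_def x_def q True by simp
          hence "KL Plo Q' = \<infinity>" by (rule KL_inf1)
          then show ?thesis using KLlo by simp
        next
          case False
          hence q01: "0 < q" "q < 1" using q qn0 by auto
          have "qs \<noteq> q" using Q' Dists_eq[OF QsD Q'(1)] Qs0 unfolding q_def by auto
          hence pos: "RR qs q > 0" using gibbs[of qs q] qs01 q01 by force
          have "ws * RR x q + (1-ws) * RR y q = ws * RR x qs + (1-ws) * RR y qs + RR qs q"
            by (rule identity[OF qsw])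
          hence "ws * RR x q + (1-ws) * RR y q > C" using pos qs(3) unfolding C_def by (simp add: algebra_simps)
          hence "RR x q > C \<or> RR y q > C"
          proof -
            assume h: "ws * RR x q + (1-ws) * RR y q > C"
            { assume "RR x q \<le> C" "RR y q \<le> C"
              hence "ws * RR x q + (1-ws) * RR y q \<le> ws * C + (1-ws) * C"
                using ws by (intro add_mono mult_left_mono) auto
              hence False using h by (simp add: algebra_simps) }
            then show ?thesis by force
          qed
          moreover have "KL Plo Q' = ereal (RR x q)" "KL Phi Q' = ereal (RR y q)"
            using KL_RR[OF assms(3) Q'(1)] KL_RR[OF assms(4) Q'(1)] q01 unfolding x_def y_def q_def by auto
          ultimately show ?thesis using KLlo by auto
        qed
      qed
    qed
    have combQs: "combination Pdot (Pdd ` {1..c}) = {Qs}" using comb QsD maxs strict by blast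
    have objv: "mix_objective Plo Phi v = ereal (C - RR (v * x + (1-v) * y) qs)" if v: "0 \<le> v" "v \<le> 1" for v
    proof -
      define qv where "qv = v * x + (1-v) * y"
      have mD: "mix v Plo Phi \<in> Dists" using mix_Dists assms(3,4) v by auto
      have m0: "mix v Plo Phi 0 = qv" unfolding mix_def qv_def x_def y_def by simp
      have qv1: "1 - qv = v * (1-x) + (1-v) * (1-y)" unfolding qv_def by (simp add: algebra_simps)
      have nn: "0 \<le> v * x" "0 \<le> (1-v) * y" "0 \<le> v * (1-x)" "0 \<le> (1-v) * (1-y)" using v xy by auto
      have a: "ereal v * KL Plo (mix v Plo Phi) = ereal (v * RR x qv)"
        unfolding KL_split[OF assms(3) mD] m0 x_def[symmetric]
      proof (rule weighted)
        show "0 \<le> v" "0 \<le> x" "x \<le> 1" using v xy by auto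
        show "0 < qv" if "0 < v" "0 < x"
        proof -
          have "0 < v * x" using that by simp
          then show ?thesis using nn unfolding qv_def by (simp add: add_pos_nonneg)
        qed
        show "qv < 1" if "0 < v" "x < 1"
        proof -
          have "0 < v * (1-x)" using that by simp
          hence "0 < v * (1 - x) + (1-v) * (1-y)" using nn by (simp add: add_pos_nonneg)
          then show ?thesis using qv1 by simp
        qed
      qed
      have b: "ereal (1-v) * KL Phi (mix v Plo Phi) = ereal ((1-v) * RR y qv)"
        unfolding KL_split[OF assms(4) mD] m0 y_def[symmetric]
      proof (rule weighted)
        show "0 \<le> 1-v" "0 \<le> y" "y \<le> 1" using v xy by auto
        show "0 < qv" if "0 < 1-v" "0 < y"
        proof -
          have "0 < (1-v) * y" using that by simp
          then show ?thesis using nn unfolding qv_def by (simp add: add_nonneg_pos)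
        qed
        show "qv < 1" if "0 < 1-v" "y < 1"
        proof -
          have "0 < (1-v) * (1-y)" using that by simp
          hence "0 < v * (1 - x) + (1-v) * (1-y)" using nn by (simp add: add_nonneg_pos)
          then show ?thesis using qv1 by simp
        qed
      qed
      have "v * RR x qs + (1-v) * RR y qs = v * RR x qv + (1-v) * RR y qv + RR qv qs"
        by (rule identity) (simp add: qv_def)
      hence "v * RR x qv + (1-v) * RR y qv = C - RR qv qs" using qs(3) unfolding C_def by (simp add: algebra_simps)
      then show ?thesis unfolding mix_objective_def a b qv_def[symmetric] by simp
    qed
    have RRnn: "RR (v * x + (1-v) * y) qs \<ge> 0" if "0 \<le> v" "v \<le> 1" for v
    proof -
      have "0 \<le> v * x + (1-v) * y" using that xy by simp
      moreover have "v * x + (1-v) * y \<le> v * 1 + (1-v) * 1" using that xy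
        by (intro add_mono mult_left_mono) auto
      ultimately show ?thesis using gibbs qs01 by simp
    qed
    have objws: "mix_objective Plo Phi ws = ereal C"
      using objv[of ws] ws qsw[symmetric] by (simp add: RR_self)
    have wsarg: "ws \<in> argsup_w Plo Phi"
      unfolding argsup_w_def using ws objws objv RRnn by auto
    have "mix w Plo Phi = Qs" if "w \<in> argsup_w Plo Phi" for w
    proof -
      have w: "0 \<le> w" "w \<le> 1" and ge: "mix_objective Plo Phi ws \<le> mix_objective Plo Phi w"
        using that ws unfolding argsup_w_def by auto
      hence "RR (w * x + (1-w) * y) qs \<le> 0" using objv[of w] objws by simp
      hence "RR (w * x + (1-w) * y) qs = 0" using RRnn[OF w] by simp
      hence "w * x + (1-w) * y = qs"
      proof -
        assume h: "RR (w * x + (1-w) * y) qs = 0"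
        have "0 \<le> w * x + (1-w) * y" using w xy by simp
        moreover have "w * x + (1-w) * y \<le> w * 1 + (1-w) * 1" using w xy
          by (intro add_mono mult_left_mono) auto
        ultimately show ?thesis using gibbs(2)[OF _ _ qs01 h] by simp
      qed
      moreover have "mix w Plo Phi \<in> Dists" using mix_Dists assms(3,4) w by auto
      ultimately show ?thesis using Dists_eq[OF _ QsD] Qs0 unfolding mix_def x_def y_def by auto
    qed
    then show ?thesis using wsarg combQs by auto
  qed
qed

end
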